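(* Let $k$ be a field of characteristic $\neq 2$, and let $\mathfrak g$, $u_0,u_1,u_2$ and $\mathfrak g_0,\mathfrak g_1,\mathfrak g_2$ be as in the context. For each $i=0,1,2$, the set $\{u_i\}\cup\{u_it^n,\ u_i(t')^n,\ u_i(t'')^n: n\geq 1\}$ is a $k$-basis of $\mathfrak g_i$.
   Context: $\mathcal A=k[t,t^{-1},(1-t)^{-1}]$, $t'=1-t^{-1}$, $t''=(1-t)^{-1}$, $\mathfrak g=\mathfrak{sl}_2(k)\otimes_k\mathcal A$. With $x=\begin{pmatrix}-1&2\\0&1\end{pmatrix}$, $y=\begin{pmatrix}-1&0\\-2&1\end{pmatrix}$, $z=\begin{pmatrix}1&0\\0&-1\end{pmatrix}$: $u_0=\tfrac14(z\otimes 1+x\otimes t''+y\otimes(t''-1))$, $u_1=\tfrac14(x\otimes 1+y\otimes t+z\otimes(t-1))$, $u_2=\tfrac14(y\otimes 1+z\otimes t'+x\otimes(t'-1))$. $\tau_1$ is the $\mathcal A$-linear map of $\mathfrak g$ with $\tau_1(x\otimes 1)=-x\otimes 1$, $\tau_1(y\otimes 1)=-(z\otimes t'+x\otimes(t'-1))$, $\tau_1(z\otimes 1)=x\otimes t''+y\otimes(t''-1)$; $\tau_2$ is the $\mathcal A$-linear map with $\tau_2(x\otimes 1)=y\otimes t+z\otimes(t-1)$, $\tau_2(y\otimes 1)=-y\otimes 1$, $\tau_2(z\otimes 1)=-(x\otimes t''+y\otimes(t''-1))$. Then $\mathfrak g_0=\{g:\tau_1(g)=g,\tau_2(g)=-g\}$,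 $\mathfrak g_1=\{g:\tau_1(g)=-g,\tau_2(g)=g\}$, $\mathfrak g_2=\{g:\tau_1(g)=-g,\tau_2(g)=-g\}$. *)

theory Defs
  imports "HOL-Analysis.Finite_Cartesian_Product"
          "HOL-Computational_Algebra.Polynomial"
          "HOL-Computational_Algebra.Polynomial_Factorial"
begin

text \<open>The field of rational functions k(t), containing the algebra
  A = k[t, t^-1, (1-t)^-1]. The field k is the type 'a.\<close>
type_synonym 'a rf = "'a poly fract"

text \<open>2x2 matrices with entries in k(t); sl2(k) tensor A is realised as the
  traceless 2x2 matrices with entries in A, with X tensor f = f X.\<close>
type_synonym 'a mat = "'a rf ^ 2 ^ 2"

definition kc :: "'a::field \<Rightarrow> 'a rf" where
  "kc c = to_fract [:c:]"

definition tvar :: "'a::field rf" where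
  "tvar = to_fract [:0, 1:]"

definition tp :: "'a::field rf" where
  "tp = 1 - inverse tvar"

definition tpp :: "'a::field rf" where
  "tpp = inverse (1 - tvar)"

definition Aset :: "'a::field rf set" where
  "Aset = {to_fract p / (tvar ^ m * (1 - tvar) ^ n) | p m n. True}"

definition mk :: "'b \<Rightarrow> 'b \<Rightarrow> 'b \<Rightarrow> 'b \<Rightarrow> 'b ^ 2 ^ 2" where
  "mk a b c d = (\<chi> i j. if i = 1 then (if j = 1 then a else b)
                              else (if j = 1 then c else d))"

definition sm :: "'b::times \<Rightarrow> 'b ^ 2 ^ 2 \<Rightarrow> 'b ^ 2 ^ 2" where
  "sm f M = (\<chi> i j. f * M $ i $ j)"

definition tens :: "'b::times ^ 2 ^ 2 \<Rightarrow> 'b \<Rightarrow> 'b ^ 2 ^ 2" where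
  "tens X f = sm f X"

definition gset :: "'a::field mat set" where
  "gset = {M. (\<forall>i j. M $ i $ j \<in> Aset) \<and> M $ 1 $ 1 + M $ 2 $ 2 = 0}"

definition Xm :: "'a::field mat" where "Xm = mk (-1) 2 0 1"
definition Ym :: "'a::field mat" where "Ym = mk (-1) 0 (-2) 1"
definition Zm :: "'a::field mat" where "Zm = mk 1 0 0 (-1)"

definition u0 :: "'a::field mat" where
  "u0 = sm (1/4) (tens Zm 1 + tens Xm tpp + tens Ym (tpp - 1))"
definition u1 :: "'a::field mat" where
  "u1 = sm (1/4) (tens Xm 1 + tens Ym tvar + tens Zm (tvar - 1))"
definition u2 :: "'a::field mat" where
  "u2 = sm (1/4) (tens Ym 1 + tens Zm tp + tens Xm (tp - 1))"

definition A_linear :: "('a::field mat \<Rightarrow> 'a mat) \<Rightarrow> bool" where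
  "A_linear \<tau> \<longleftrightarrow> (\<forall>M\<in>gset. \<tau> M \<in> gset) \<and>
     (\<forall>f\<in>Aset. \<forall>M\<in>gset. \<forall>N\<in>gset. \<tau> (sm f M + N) = sm f (\<tau> M) + \<tau> N)"

definition tau1_spec :: "('a::field mat \<Rightarrow> 'a mat) \<Rightarrow> bool" where
  "tau1_spec \<tau> \<longleftrightarrow> A_linear \<tau> \<and>
     \<tau> (tens Xm 1) = - tens Xm 1 \<and>
     \<tau> (tens Ym 1) = - (tens Zm tp + tens Xm (tp - 1)) \<and>
     \<tau> (tens Zm 1) = tens Xm tpp + tens Ym (tpp - 1)"

definition tau2_spec :: "('a::field mat \<Rightarrow> 'a mat) \<Rightarrow> bool" where
  "tau2_spec \<tau> \<longleftrightarrow> A_linear \<tau> \<and>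
     \<tau> (tens Xm 1) = tens Ym tvar + tens Zm (tvar - 1) \<and>
     \<tau> (tens Ym 1) = - tens Ym 1 \<and>
     \<tau> (tens Zm 1) = - (tens Xm tpp + tens Ym (tpp - 1))"

definition g0 :: "('a::field mat \<Rightarrow> 'a mat) \<Rightarrow> ('a mat \<Rightarrow> 'a mat) \<Rightarrow> 'a mat set" where
  "g0 \<tau>1 \<tau>2 = {M \<in> gset. \<tau>1 M = M \<and> \<tau>2 M = - M}"
definition g1 :: "('a::field mat \<Rightarrow> 'a mat) \<Rightarrow> ('a mat \<Rightarrow> 'a mat) \<Rightarrow> 'a mat set" where
  "g1 \<tau>1 \<tau>2 = {M \<in> gset. \<tau>1 M = - M \<and> \<tau>2 M = M}"
definition g2 :: "('a::field mat \<Rightarrow> 'a mat) \<Rightarrow> ('a mat \<Rightarrow> 'a mat) \<Rightarrow> 'a mat set" where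
  "g2 \<tau>1 \<tau>2 = {M \<in> gset. \<tau>1 M = - M \<and> \<tau>2 M = - M}"

text \<open>k-linear span, k-linear independence and k-bases inside g
  (k acts via the constants kc c).\<close>
definition k_span :: "'a::field mat set \<Rightarrow> 'a mat set" where
  "k_span S = {v. \<exists>F c. finite F \<and> F \<subseteq> S \<and> v = (\<Sum>w\<in>F. sm (kc (c w)) w)}"

definition k_indep :: "'a::field mat set \<Rightarrow> bool" where
  "k_indep S \<longleftrightarrow> (\<forall>F c. finite F \<and> F \<subseteq> S \<and> (\<Sum>w\<in>F. sm (kc (c w)) w) = 0
                     \<longrightarrow> (\<forall>w\<in>F. c w = 0))"

definition k_basis :: "'a::field mat set \<Rightarrow> 'a mat set \<Rightarrow> bool" where
  "k_basis S V \<longleftrightarrow> S \<subseteq> V \<and> k_indep S \<and> k_span S = V"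

definition Bset :: "'a::field mat \<Rightarrow> 'a mat set" where
  "Bset u = {u} \<union> {tens u (tvar ^ n) | n. n \<ge> 1} \<union> {tens u (tp ^ n) | n. n \<ge> 1}
              \<union> {tens u (tpp ^ n) | n. n \<ge> 1}"

end

theory Submission
  imports Defs "HOL-Analysis.Cartesian_Space"
begin

abbreviation X1 :: "'a::field poly" where "X1 \<equiv> [:0, 1:]"
abbreviation S1 :: "'a::field poly" where "S1 \<equiv> [:1, -1:]"

lemma to_fract_power: "to_fract (p ^ n) = to_fract p ^ n"
  by (induct n) simp_all

lemma tvar_alt: "tvar = to_fract X1" by (simp add: tvar_def)
lemma svar_alt: "1 - tvar = (to_fract S1 :: 'a::field rf)"
proof -
  have "(1::'a poly) - [:0,1:] = [:1,-1:]" by (simp add: one_pCons)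
  then show ?thesis unfolding tvar_def by (metis to_fract_1 to_fract_diff)
qed

lemma tvar_nz: "(tvar :: 'a::field rf) \<noteq> 0" by (simp add: tvar_alt)
lemma svar_nz: "1 - (tvar :: 'a::field rf) \<noteq> 0" by (simp add: svar_alt)

lemma kc_add: "kc (a + b) = kc a + kc b" by (simp add: kc_def flip: to_fract_add)
lemma kc_mult: "kc (a * b) = kc a * kc b" by (simp add: kc_def flip: to_fract_mult)
lemma kc_0[simp]: "kc 0 = 0" by (simp add: kc_def)
lemma kc_1[simp]: "kc 1 = 1" by (simp add: kc_def one_pCons[symmetric])
lemma kc_uminus: "kc (-a) = - kc a" by (simp add: kc_def flip: to_fract_uminus)
lemma kc_diff: "kc (a - b) = kc a - kc b" by (simp add: kc_def flip: to_fract_diff)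
lemma kc_eq_iff[simp]: "kc a = kc b \<longleftrightarrow> a = b" by (simp add: kc_def)
lemma kc_of_nat: "kc (of_nat n) = of_nat n"
  by (induct n) (simp_all add: kc_add)
lemma kc_numeral: "kc (numeral n) = numeral n"
  using kc_of_nat[of "numeral n"] by simp
lemma kc_inverse: "kc (inverse a) = inverse (kc a)"
proof (cases "a = 0")
  case False
  then have "kc a * kc (inverse a) = 1" by (simp add: kc_mult[symmetric])
  then show ?thesis by (metis inverse_unique)
qed simp

lemma AsetI: "f = to_fract p / (tvar ^ m * (1 - tvar) ^ n) \<Longrightarrow> f \<in> Aset"
  unfolding Aset_def by blast

lemma AsetE: assumes "f \<in> Aset"
  obtains p m n where "f = to_fract p / (tvar ^ m * (1 - tvar) ^ n)"
  using assms unfolding Aset_def by blast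

lemma A_poly: "to_fract p \<in> Aset"
  by (rule AsetI[of _ p 0 0]) simp

lemma A_kc: "kc c \<in> Aset" unfolding kc_def by (rule A_poly)
lemma A_0: "0 \<in> Aset" using A_poly[of 0] by simp
lemma A_1: "1 \<in> Aset" using A_poly[of 1] by simp
lemma A_tvar: "tvar \<in> Aset" unfolding tvar_def by (rule A_poly)

lemma frac_add_aux: fixes a b :: "'b::field"
  assumes "a \<noteq> 0" "b \<noteq> 0"
  shows "x / (a ^ m * b ^ n) + y / (a ^ m' * b ^ n') = (x * a ^ m' * b ^ n' + y * a ^ m * b ^ n) / (a ^ (m + m') * b ^ (n + n'))"
  using assms by (simp add: field_simps power_add)

lemma A_add: assumes "f \<in> Aset" "g \<in> Aset" shows "f + g \<in> Aset"
proof -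
  obtain p m n where f: "f = to_fract p / (tvar ^ m * (1 - tvar) ^ n)" using assms(1) by (rule AsetE)
  obtain q m' n' where g: "g = to_fract q / (tvar ^ m' * (1 - tvar) ^ n')" using assms(2) by (rule AsetE)
  have "f + g = to_fract (p * X1 ^ m' * S1 ^ n' + q * X1 ^ m * S1 ^ n) / (tvar ^ (m + m') * (1 - tvar) ^ (n + n'))"
    unfolding f g frac_add_aux[OF tvar_nz svar_nz]
    by (simp add: to_fract_power svar_alt[symmetric] tvar_alt[symmetric])
  then show ?thesis by (rule AsetI)
qed

lemma A_mult: assumes "f \<in> Aset" "g \<in> Aset" shows "f * g \<in> Aset"
proof -
  obtain p m n where f: "f = to_fract p / (tvar ^ m * (1 - tvar) ^ n)" using assms(1) by (rule AsetE)
  obtain q m' n' where g: "g = to_fract q / (tvar ^ m' * (1 - tvar) ^ n')" using assms(2) by (rule AsetE)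
  have "f * g = to_fract (p * q) / (tvar ^ (m + m') * (1 - tvar) ^ (n + n'))"
    unfolding f g using tvar_nz svar_nz
    by (simp add: field_simps power_add)
  then show ?thesis by (rule AsetI)
qed

lemma A_uminus: assumes "f \<in> Aset" shows "- f \<in> Aset"
proof -
  have "- f = kc (-1) * f" by (simp add: kc_uminus)
  then show ?thesis using A_mult[OF A_kc assms] by simp
qed

lemma A_diff: assumes "f \<in> Aset" "g \<in> Aset" shows "f - g \<in> Aset"
  using A_add[OF assms(1) A_uminus[OF assms(2)]] by simp

lemma A_numeral: "numeral n \<in> Aset" using A_kc[of "numeral n"] by (simp add: kc_numeral)

lemma A_tpp: "tpp \<in> Aset"
  unfolding tpp_def by (rule AsetI[of _ 1 0 1]) (simp add: field_simps)

lemma A_tp: "(tp :: 'a::field rf) \<in> Aset"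
proof -
  have ti: "(tvar :: 'a rf) * inverse tvar = 1" by (rule right_inverse[OF tvar_nz])
  have "((tvar :: 'a rf) - 1) * inverse tvar = 1 - inverse tvar" by (simp add: left_diff_distrib ti)
  then have "(tp::'a rf) = (tvar - 1) / tvar" by (simp add: tp_def divide_inverse)
  also have "\<dots> = to_fract (X1 - 1) / (tvar ^ 1 * (1 - tvar) ^ 0)"
    by (simp add: tvar_alt)
  finally show ?thesis by (rule AsetI)
qed

lemma A_div_const: fixes f :: "'a::field rf" assumes "f \<in> Aset" shows "f / numeral n \<in> Aset"
proof -
  have nk: "(numeral n :: 'a rf) = kc (numeral n)" by (rule kc_numeral[symmetric])
  show ?thesis
  proof (cases "(numeral n :: 'a) = 0")
    case True
    then have "(numeral n :: 'a rf) = 0" unfolding nk by simp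
    then show ?thesis using A_0 by simp
  next
    case False
    have eq: "f / numeral n = kc (inverse (numeral n)) * f"
      unfolding nk kc_inverse by (simp add: divide_inverse mult.commute)
    show ?thesis unfolding eq by (rule A_mult[OF A_kc assms])
  qed
qed

lemma A_power: assumes "f \<in> Aset" shows "f ^ k \<in> Aset"
  by (induct k) (simp_all add: A_1 A_mult assms)

lemma mk_nth[simp]: "mk a b c d $ 1 $ 1 = a" "mk a b c d $ 1 $ 2 = b" "mk a b c d $ 2 $ 1 = c" "mk a b c d $ 2 $ 2 = d"
  by (simp_all add: mk_def)

lemma mat_eqI: "M $ 1 $ 1 = N $ 1 $ 1 \<Longrightarrow> M $ 1 $ 2 = N $ 1 $ 2 \<Longrightarrow> M $ 2 $ 1 = N $ 2 $ 1 \<Longrightarrow> M $ 2 $ 2 = N $ 2 $ 2 \<Longrightarrow> M = (N :: 'b ^ 2 ^ 2)"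
  by (simp add: vec_eq_iff forall_2)

lemma mk_eq_iff: "mk a b c d = mk a' b' c' d' \<longleftrightarrow> a = a' \<and> b = b' \<and> c = c' \<and> d = d'"
  by (auto intro: mat_eqI dest: arg_cong[where f="\<lambda>M. M $ 1 $ 1"] arg_cong[where f="\<lambda>M. M $ 1 $ 2"]
    arg_cong[where f="\<lambda>M. M $ 2 $ 1"] arg_cong[where f="\<lambda>M. M $ 2 $ 2"])

lemma mk_add: "mk a b c d + mk a' b' c' d' = mk (a + a') (b + b') (c + c') (d + d')"
  by (rule mat_eqI) simp_all
lemma mk_uminus: "- mk a b c d = mk (-a) (-b) (-c) (-d)"
  by (rule mat_eqI) simp_all
lemma sm_mk: "sm f (mk a b c d) = mk (f * a) (f * b) (f * c) (f * d)"
  by (rule mat_eqI) (simp_all add: sm_def)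
lemma mk_zero: "0 = mk 0 0 0 0"
  by (rule mat_eqI) simp_all
lemma mat_mk: "M = mk (M $ 1 $ 1) (M $ 1 $ 2) (M $ 2 $ 1) (M $ 2 $ 2)"
  by (rule mat_eqI) simp_all

definition L :: "'a::field rf \<Rightarrow> 'a rf \<Rightarrow> 'a rf \<Rightarrow> 'a mat" where
  "L a b c = sm a Xm + sm b Ym + sm c Zm"

lemma L_mk: "L a b c = mk (c - a - b) (2 * a) (- (2 * b)) (a + b - c)"
  unfolding L_def Xm_def Ym_def Zm_def sm_mk mk_add mk_eq_iff by simp

lemma L_add: "L a b c + L a' b' c' = L (a + a') (b + b') (c + c')"
  unfolding L_mk mk_add mk_eq_iff by (simp add: algebra_simps)
lemma L_uminus: "- L a b c = L (-a) (-b) (-c)"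
  unfolding L_mk mk_uminus mk_eq_iff by (simp add: algebra_simps)
lemma L_sm: "sm f (L a b c) = L (f * a) (f * b) (f * c)"
  unfolding L_mk sm_mk mk_eq_iff by (simp add: algebra_simps)
lemma L_zero: "0 = L 0 0 0"
  unfolding L_mk mk_zero[symmetric] by (simp add: mk_zero)

lemma two_nz: assumes "(2::'a::field) \<noteq> 0" shows "(2::'a rf) \<noteq> 0"
  using assms by (metis kc_0 kc_eq_iff kc_numeral)

lemma four_nz: assumes "(2::'a::field) \<noteq> 0" shows "(4::'a rf) \<noteq> 0"
proof -
  have "(4::'a rf) = 2 * 2" by simp
  then show ?thesis using two_nz[OF assms] by (metis no_zero_divisors)
qed

lemma L_inj: assumes "(2::'a::field) \<noteq> 0" and "L a b c = L a' b' c'"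
  shows "a = a' \<and> b = b' \<and> c = (c' :: 'a rf)"
proof -
  have 2: "(2::'a rf) \<noteq> 0" using two_nz[OF assms(1)] .
  from assms(2) have e: "c - a - b = c' - a' - b'" "2 * a = 2 * a'" "2 * b = 2 * b'"
    unfolding L_mk mk_eq_iff by auto
  from e(2) 2 have "a = a'" by simp
  moreover from e(3) 2 have "b = b'" by simp
  ultimately show ?thesis using e(1) by simp
qed

lemma gset_L: assumes "a \<in> Aset" "b \<in> Aset" "c \<in> Aset" shows "L a b c \<in> gset"
proof -
  have "(L a b c) $ i $ j \<in> Aset" for i j
    using assms unfolding L_mk
    using exhaust_2[of i] exhaust_2[of j]
    by (auto simp add: A_add A_diff A_mult A_uminus A_numeral)
  then show ?thesis unfolding gset_def L_mk by simp
qed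

lemma gset_decomp: assumes "(2::'a::field) \<noteq> 0" "(M :: 'a mat) \<in> gset"
  obtains a b c where "a \<in> Aset" "b \<in> Aset" "c \<in> Aset" "M = L a b c"
proof -
  have t: "M $ 1 $ 1 + M $ 2 $ 2 = 0" and e: "\<And>i j. M $ i $ j \<in> Aset" using assms(2) by (auto simp: gset_def)
  define a where "a = M $ 1 $ 2 / 2"
  define b where "b = - (M $ 2 $ 1 / 2)"
  define c where "c = M $ 1 $ 1 + a + b"
  have "a \<in> Aset" unfolding a_def by (rule A_div_const[OF e])
  moreover have "b \<in> Aset" unfolding b_def by (rule A_uminus[OF A_div_const[OF e]])
  moreover have "c \<in> Aset" unfolding c_def using e \<open>a \<in> Aset\<close> \<open>b \<in> Aset\<close> by (simp add: A_add)
  moreover have "M = L a b c" 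
  proof -
    have 2: "(2::'a rf) \<noteq> 0" using two_nz[OF assms(1)] .
    have "2 * a = M $ 1 $ 2" "- (2 * b) = M $ 2 $ 1" using 2 by (simp_all add: a_def b_def)
    moreover have "c - a - b = M $ 1 $ 1" by (simp add: c_def)
    moreover have "a + b - c = M $ 2 $ 2" using t by (simp add: c_def add_eq_0_iff)
    ultimately show ?thesis by (subst mat_mk) (simp add: L_mk mk_eq_iff)
  qed
  ultimately show ?thesis using that by blast
qed

lemma sm_one: "sm 1 (M :: 'b::monoid_mult ^ 2 ^ 2) = M" by (simp add: sm_def vec_eq_iff)
lemma sm_zero: "sm 0 (M :: 'b::mult_zero ^ 2 ^ 2) = 0" by (simp add: sm_def vec_eq_iff)
lemma tens_one: "tens (M :: 'b::monoid_mult ^ 2 ^ 2) 1 = M" by (simp add: tens_def sm_one)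

lemma sm_X: "sm f Xm = L f 0 0" by (simp add: L_def sm_zero)
lemma sm_Y: "sm f Ym = L 0 f 0" by (simp add: L_def sm_zero)
lemma sm_Z: "sm f Zm = L 0 0 f" by (simp add: L_def sm_zero)
lemma X_L: "Xm = L 1 0 0" by (simp add: L_def sm_zero sm_one)
lemma Y_L: "Ym = L 0 1 0" by (simp add: L_def sm_zero sm_one)
lemma Z_L: "Zm = L 0 0 1" by (simp add: L_def sm_zero sm_one)

lemma gset_0: "0 \<in> gset" using gset_L[OF A_0 A_0 A_0] by (simp flip: L_zero)

lemma A_linear_zero: assumes "A_linear \<tau>" shows "\<tau> 0 = 0"
proof -
  have "\<tau> (sm 1 0 + 0) = sm 1 (\<tau> 0) + \<tau> 0" using assms gset_0 A_1 unfolding A_linear_def by blast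
  then show ?thesis by (simp add: sm_one)
qed

lemma A_linear_sm: assumes "A_linear \<tau>" "f \<in> Aset" "M \<in> gset" shows "\<tau> (sm f M) = sm f (\<tau> M)"
proof -
  have "\<tau> (sm f M + 0) = sm f (\<tau> M) + \<tau> 0" using assms gset_0 unfolding A_linear_def by blast
  then show ?thesis using A_linear_zero[OF assms(1)] by simp
qed

lemma tau_L: assumes "A_linear \<tau>" "a \<in> Aset" "b \<in> Aset" "c \<in> Aset"
  shows "\<tau> (L a b c) = sm a (\<tau> Xm) + sm b (\<tau> Ym) + sm c (\<tau> Zm)"
proof -
  have gX: "Xm \<in> gset" unfolding X_L by (rule gset_L[OF A_1 A_0 A_0])
  have gY: "Ym \<in> gset" unfolding Y_L by (rule gset_L[OF A_0 A_1 A_0])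
  have gZ: "Zm \<in> gset" unfolding Z_L by (rule gset_L[OF A_0 A_0 A_1])
  have g1: "L 0 b c \<in> gset" by (rule gset_L[OF A_0 assms(3,4)])
  have lin: "\<And>f M N. f \<in> Aset \<Longrightarrow> M \<in> gset \<Longrightarrow> N \<in> gset \<Longrightarrow> \<tau> (sm f M + N) = sm f (\<tau> M) + \<tau> N"
    using assms(1) unfolding A_linear_def by blast
  have "L a b c = sm a Xm + L 0 b c" by (simp add: L_def sm_zero add.assoc)
  then have "\<tau> (L a b c) = sm a (\<tau> Xm) + \<tau> (L 0 b c)"
    using lin[OF assms(2) gX g1] by simp
  moreover have "L 0 b c = sm b Ym + L 0 0 c" by (simp add: L_def sm_zero)
  moreover have "L 0 0 c \<in> gset" by (rule gset_L[OF A_0 A_0 assms(4)])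
  ultimately have "\<tau> (L a b c) = sm a (\<tau> Xm) + sm b (\<tau> Ym) + \<tau> (L 0 0 c)"
    using lin[OF assms(3) gY \<open>L 0 0 c \<in> gset\<close>] by (simp add: add.assoc)
  moreover have "\<tau> (L 0 0 c) = sm c (\<tau> Zm)" 
    using A_linear_sm[OF assms(1,4) gZ] by (simp add: sm_Z)
  ultimately show ?thesis by simp
qed

lemma L_cong: "a = a' \<Longrightarrow> b = b' \<Longrightarrow> c = c' \<Longrightarrow> L a b c = L a' b' c'" by simp

lemma tau1_L: assumes "tau1_spec \<tau>" "a \<in> Aset" "b \<in> Aset" "c \<in> Aset"
  shows "\<tau> (L a b c) = L (- a + b * (1 - tp) + c * tpp) (c * (tpp - 1)) (- (b * tp))"
proof -
  have l: "A_linear \<tau>" and x: "\<tau> Xm = L (-1) 0 0" and y: "\<tau> Ym = L (1 - tp) 0 (- tp)"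
    and z: "\<tau> Zm = L tpp (tpp - 1) 0"
    using assms(1) unfolding tau1_spec_def tens_one
    by (simp_all add: tens_def sm_X sm_Y sm_Z L_add L_uminus X_L[symmetric])
       (simp add: X_L L_uminus)
  show ?thesis unfolding tau_L[OF l assms(2-4)] x y z L_sm L_add
    by (rule L_cong) (simp_all add: algebra_simps)
qed

lemma tau2_L: assumes "tau2_spec \<tau>" "a \<in> Aset" "b \<in> Aset" "c \<in> Aset"
  shows "\<tau> (L a b c) = L (- (c * tpp)) (a * tvar - b + c * (1 - tpp)) (a * (tvar - 1))"
proof -
  have l: "A_linear \<tau>" and x: "\<tau> Xm = L 0 tvar (tvar - 1)" and y: "\<tau> Ym = L 0 (-1) 0"
    and z: "\<tau> Zm = L (- tpp) (1 - tpp) 0"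
    using assms(1) unfolding tau2_spec_def tens_one
    by (simp_all add: tens_def sm_X sm_Y sm_Z L_add L_uminus Y_L[symmetric])
       (simp add: Y_L L_uminus)
  show ?thesis unfolding tau_L[OF l assms(2-4)] x y z L_sm L_add
    by (rule L_cong) (simp_all add: algebra_simps)
qed

lemma u0_L: "u0 = L (tpp / 4) ((tpp - 1) / 4) (1 / 4)"
  unfolding u0_def tens_def sm_X sm_Y sm_Z tens_one Z_L L_add L_sm by (rule L_cong) simp_all
lemma u1_L: "u1 = L (1 / 4) (tvar / 4) ((tvar - 1) / 4)"
  unfolding u1_def tens_def sm_X sm_Y sm_Z tens_one X_L L_add L_sm by (rule L_cong) simp_all
lemma u2_L: "u2 = L ((tp - 1) / 4) (1 / 4) (tp / 4)"
  unfolding u2_def tens_def sm_X sm_Y sm_Z tens_one Y_L L_add L_sm by (rule L_cong) simp_all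

lemma eqs_generic:
  fixes x f :: "'b::field"
  assumes x0: "x \<noteq> 0" and x1: "x \<noteq> 1" and f4: "(4::'b) \<noteq> 0"
  defines "p \<equiv> 1 - inverse x" and "q \<equiv> inverse (1 - x)"
  shows
  "- (f * (q / 4)) + f * ((q - 1) / 4) * (1 - p) + f * (1 / 4) * q = f * (q / 4)"
  "f * (1 / 4) * (q - 1) = f * ((q - 1) / 4)"
  "- (f * ((q - 1) / 4) * p) = f * (1 / 4)"
  "- (f * (1 / 4) * q) = - (f * (q / 4))"
  "f * (q / 4) * x - f * ((q - 1) / 4) + f * (1 / 4) * (1 - q) = - (f * ((q - 1) / 4))"
  "f * (q / 4) * (x - 1) = - (f * (1 / 4))"
  "- (f * (1 / 4)) + f * (x / 4) * (1 - p) + f * ((x - 1) / 4) * q = - (f * (1 / 4))"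
  "f * ((x - 1) / 4) * (q - 1) = - (f * (x / 4))"
  "- (f * (x / 4) * p) = - (f * ((x - 1) / 4))"
  "- (f * ((x - 1) / 4) * q) = f * (1 / 4)"
  "f * (1 / 4) * x - f * (x / 4) + f * ((x - 1) / 4) * (1 - q) = f * (x / 4)"
  "f * (1 / 4) * (x - 1) = f * ((x - 1) / 4)"
  "- (f * ((p - 1) / 4)) + f * (1 / 4) * (1 - p) + f * (p / 4) * q = - (f * ((p - 1) / 4))"
  "f * (p / 4) * (q - 1) = - (f * (1 / 4))"
  "- (f * (1 / 4) * p) = - (f * (p / 4))"
  "- (f * (p / 4) * q) = - (f * ((p - 1) / 4))"
  "f * ((p - 1) / 4) * x - f * (1 / 4) + f * (p / 4) * (1 - q) = - (f * (1 / 4))"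
  "f * ((p - 1) / 4) * (x - 1) = - (f * (p / 4))"
proof -
  have 16: "(16::'b) \<noteq> 0" using f4 by (metis mult_eq_0_iff num_double numeral_times_numeral)
  have x1': "1 - x \<noteq> 0" using x1 by simp
  have h1: "x * (x * 16) - x * (x * (x * 16)) \<noteq> 0"
  proof -
    have "x * (x * 16) - x * (x * (x * 16)) = 16 * x * x * (1 - x)" by (simp add: algebra_simps)
    then show ?thesis using 16 x0 x1' by simp
  qed
  have h2: "x * 16 - x * (x * 16) \<noteq> 0"
  proof -
    have "x * 16 - x * (x * 16) = 16 * x * (1 - x)" by (simp add: algebra_simps)
    then show ?thesis using 16 x0 x1' by simp
  qed
  note hh = h1 h2 divide_eq_eq 16
  show 
  "- (f * (q / 4)) + f * ((q - 1) / 4) * (1 - p) + f * (1 / 4) * q = f * (q / 4)"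
  "f * (1 / 4) * (q - 1) = f * ((q - 1) / 4)"
  "- (f * ((q - 1) / 4) * p) = f * (1 / 4)"
  "- (f * (1 / 4) * q) = - (f * (q / 4))"
  "f * (q / 4) * x - f * ((q - 1) / 4) + f * (1 / 4) * (1 - q) = - (f * ((q - 1) / 4))"
  "f * (q / 4) * (x - 1) = - (f * (1 / 4))"
  "- (f * (1 / 4)) + f * (x / 4) * (1 - p) + f * ((x - 1) / 4) * q = - (f * (1 / 4))"
  "f * ((x - 1) / 4) * (q - 1) = - (f * (x / 4))"
  "- (f * (x / 4) * p) = - (f * ((x - 1) / 4))"
  "- (f * ((x - 1) / 4) * q) = f * (1 / 4)"
  "f * (1 / 4) * x - f * (x / 4) + f * ((x - 1) / 4) * (1 - q) = f * (x / 4)"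
  "f * (1 / 4) * (x - 1) = f * ((x - 1) / 4)"
  "- (f * ((p - 1) / 4)) + f * (1 / 4) * (1 - p) + f * (p / 4) * q = - (f * ((p - 1) / 4))"
  "f * (p / 4) * (q - 1) = - (f * (1 / 4))"
  "- (f * (1 / 4) * p) = - (f * (p / 4))"
  "- (f * (p / 4) * q) = - (f * ((p - 1) / 4))"
  "f * ((p - 1) / 4) * x - f * (1 / 4) + f * (p / 4) * (1 - q) = - (f * (1 / 4))"
  "f * ((p - 1) / 4) * (x - 1) = - (f * (p / 4))"
  using x0 x1 f4 unfolding p_def q_def by (simp_all add: field_simps) (simp_all add: hh algebra_simps)
qed

lemma tvar_ne1: "(tvar :: 'a::field rf) \<noteq> 1" using svar_nz by simp

lemma A_quarter: "f \<in> Aset \<Longrightarrow> f / 4 \<in> Aset" using A_div_const[of f "num.Bit0 (num.Bit0 num.One)"] by simp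

lemmas EQS = eqs_generic[OF tvar_nz tvar_ne1, folded tp_def tpp_def]

lemma g0_eq: assumes two: "(2::'a::field) \<noteq> 0" and t1: "tau1_spec \<tau>1" and t2: "tau2_spec \<tau>2"
  shows "g0 \<tau>1 \<tau>2 = (\<lambda>f. sm f (u0::'a mat)) ` Aset"
proof
  have f4: "(4::'a rf) \<noteq> 0" by (rule four_nz[OF two])
  show "g0 \<tau>1 \<tau>2 \<subseteq> (\<lambda>f. sm f u0) ` Aset"
  proof
    fix M assume "M \<in> g0 \<tau>1 \<tau>2"
    then have g: "M \<in> gset" and e1: "\<tau>1 M = M" and e2: "\<tau>2 M = - M" by (auto simp: g0_def)
    obtain a b c where abc: "a \<in> Aset" "b \<in> Aset" "c \<in> Aset" and M: "M = L a b c"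
      using gset_decomp[OF two g] by blast
    have r1: "c * (tpp - 1) = b" using L_inj[OF two e1[unfolded M tau1_L[OF t1 abc]]] by simp
    have r2: "c * tpp = a" using L_inj[OF two e2[unfolded M tau2_L[OF t2 abc] L_uminus]] by simp
    have "M = sm (4 * c) u0" unfolding M u0_L L_sm
      by (rule L_cong) (use f4 r1 r2 in auto)
    moreover have "4 * c \<in> Aset" by (rule A_mult[OF A_numeral abc(3)])
    ultimately show "M \<in> (\<lambda>f. sm f u0) ` Aset" by blast
  qed
  show "(\<lambda>f. sm f u0) ` Aset \<subseteq> g0 \<tau>1 \<tau>2"
  proof
    fix M assume "M \<in> (\<lambda>f. sm f (u0::'a mat)) ` Aset"
    then obtain f where f: "f \<in> Aset" and M: "M = sm f u0" by blast
    have M': "M = L (f * (tpp / 4)) (f * ((tpp - 1) / 4)) (f * (1 / 4))" unfolding M u0_L L_sm ..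
    have abc: "f * (tpp / 4) \<in> Aset" "f * ((tpp - 1) / 4) \<in> Aset" "f * (1 / 4) \<in> Aset"
      by (rule A_mult[OF f A_quarter[OF A_tpp]], rule A_mult[OF f A_quarter[OF A_diff[OF A_tpp A_1]]],
          rule A_mult[OF f A_quarter[OF A_1]])
    have "M \<in> gset" unfolding M' by (rule gset_L[OF abc])
    moreover have "\<tau>1 M = M" unfolding M' tau1_L[OF t1 abc]
      by (rule L_cong) (simp_all only: EQS[OF f4])
    moreover have "\<tau>2 M = - M" unfolding M' tau2_L[OF t2 abc] L_uminus
      by (rule L_cong) (simp_all only: EQS[OF f4])
    ultimately show "M \<in> g0 \<tau>1 \<tau>2" by (simp add: g0_def)
  qed
qed


lemma aux_g1: "((tvar::'a::field rf) - 1) * (tpp - 1) = - tvar"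
proof -
  have i: "(1 - (tvar::'a rf)) * inverse (1 - tvar) = 1" by (rule right_inverse[OF svar_nz])
  have "((tvar::'a rf) - 1) * (tpp - 1) = - ((1 - tvar) * inverse (1 - tvar)) - tvar + 1"
    unfolding tpp_def by (simp add: algebra_simps)
  then show ?thesis using i by simp
qed
lemma aux_g2: "(tp::'a::field rf) * tpp = tp - 1"
  using tvar_nz[where 'a='a] tvar_ne1[where 'a='a] unfolding tpp_def tp_def by (simp add: field_simps)

lemma g1_eq: assumes two: "(2::'a::field) \<noteq> 0" and t1: "tau1_spec \<tau>1" and t2: "tau2_spec \<tau>2"
  shows "g1 \<tau>1 \<tau>2 = (\<lambda>f. sm f (u1::'a mat)) ` Aset"
proof
  have f4: "(4::'a rf) \<noteq> 0" by (rule four_nz[OF two])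
  show "g1 \<tau>1 \<tau>2 \<subseteq> (\<lambda>f. sm f u1) ` Aset"
  proof
    fix M assume "M \<in> g1 \<tau>1 \<tau>2"
    then have g: "M \<in> gset" and e1: "\<tau>1 M = - M" and e2: "\<tau>2 M = M" by (auto simp: g1_def)
    obtain a b c where abc: "a \<in> Aset" "b \<in> Aset" "c \<in> Aset" and M: "M = L a b c"
      using gset_decomp[OF two g] by blast
    have r1: "c * (tpp - 1) = - b" using L_inj[OF two e1[unfolded M tau1_L[OF t1 abc] L_uminus]] by simp
    have r2: "a * (tvar - 1) = c" using L_inj[OF two e2[unfolded M tau2_L[OF t2 abc]]] by simp
    have r3: "b = a * tvar"
    proof -
      have "b = - (a * ((tvar - 1) * (tpp - 1)))" using r1 r2 by (simp add: algebra_simps)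
      then show ?thesis by (simp add: aux_g1)
    qed
    have "M = sm (4 * a) u1" unfolding M u1_L L_sm
      by (rule L_cong) (use f4 r2 r3 in auto)
    moreover have "4 * a \<in> Aset" by (rule A_mult[OF A_numeral abc(1)])
    ultimately show "M \<in> (\<lambda>f. sm f u1) ` Aset" by blast
  qed
  show "(\<lambda>f. sm f u1) ` Aset \<subseteq> g1 \<tau>1 \<tau>2"
  proof
    fix M assume "M \<in> (\<lambda>f. sm f (u1::'a mat)) ` Aset"
    then obtain f where f: "f \<in> Aset" and M: "M = sm f u1" by blast
    have M': "M = L (f * (1 / 4)) (f * (tvar / 4)) (f * ((tvar - 1) / 4))" unfolding M u1_L L_sm ..
    have abc: "f * (1 / 4) \<in> Aset" "f * (tvar / 4) \<in> Aset" "f * ((tvar - 1) / 4) \<in> Aset"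
      by (rule A_mult[OF f A_quarter[OF A_1]], rule A_mult[OF f A_quarter[OF A_tvar]],
          rule A_mult[OF f A_quarter[OF A_diff[OF A_tvar A_1]]])
    have "M \<in> gset" unfolding M' by (rule gset_L[OF abc])
    moreover have "\<tau>1 M = - M" unfolding M' tau1_L[OF t1 abc] L_uminus
      by (rule L_cong) (simp_all only: EQS[OF f4])
    moreover have "\<tau>2 M = M" unfolding M' tau2_L[OF t2 abc]
      by (rule L_cong) (simp_all only: EQS[OF f4])
    ultimately show "M \<in> g1 \<tau>1 \<tau>2" by (simp add: g1_def)
  qed
qed

lemma g2_eq: assumes two: "(2::'a::field) \<noteq> 0" and t1: "tau1_spec \<tau>1" and t2: "tau2_spec \<tau>2"
  shows "g2 \<tau>1 \<tau>2 = (\<lambda>f. sm f (u2::'a mat)) ` Aset"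
proof
  have f4: "(4::'a rf) \<noteq> 0" by (rule four_nz[OF two])
  show "g2 \<tau>1 \<tau>2 \<subseteq> (\<lambda>f. sm f u2) ` Aset"
  proof
    fix M assume "M \<in> g2 \<tau>1 \<tau>2"
    then have g: "M \<in> gset" and e1: "\<tau>1 M = - M" and e2: "\<tau>2 M = - M" by (auto simp: g2_def)
    obtain a b c where abc: "a \<in> Aset" "b \<in> Aset" "c \<in> Aset" and M: "M = L a b c"
      using gset_decomp[OF two g] by blast
    have r1: "b * tp = c" using L_inj[OF two e1[unfolded M tau1_L[OF t1 abc] L_uminus]] by simp
    have r2: "c * tpp = a" using L_inj[OF two e2[unfolded M tau2_L[OF t2 abc] L_uminus]] by simp
    have r3: "a = b * (tp - 1)"
    proof -
      have "a = (b * tp) * tpp" using r1 r2 by simp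
      then have "a = b * (tp * tpp)" by (simp only: mult.assoc)
      then show ?thesis by (simp add: aux_g2)
    qed
    have "M = sm (4 * b) u2" unfolding M u2_L L_sm
      by (rule L_cong) (use f4 r1 r3 in auto)
    moreover have "4 * b \<in> Aset" by (rule A_mult[OF A_numeral abc(2)])
    ultimately show "M \<in> (\<lambda>f. sm f u2) ` Aset" by blast
  qed
  show "(\<lambda>f. sm f u2) ` Aset \<subseteq> g2 \<tau>1 \<tau>2"
  proof
    fix M assume "M \<in> (\<lambda>f. sm f (u2::'a mat)) ` Aset"
    then obtain f where f: "f \<in> Aset" and M: "M = sm f u2" by blast
    have M': "M = L (f * ((tp - 1) / 4)) (f * (1 / 4)) (f * (tp / 4))" unfolding M u2_L L_sm ..
    have abc: "f * ((tp - 1) / 4) \<in> Aset" "f * (1 / 4) \<in> Aset" "f * (tp / 4) \<in> Aset"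
      by (rule A_mult[OF f A_quarter[OF A_diff[OF A_tp A_1]]], rule A_mult[OF f A_quarter[OF A_1]],
          rule A_mult[OF f A_quarter[OF A_tp]])
    have "M \<in> gset" unfolding M' by (rule gset_L[OF abc])
    moreover have "\<tau>1 M = - M" unfolding M' tau1_L[OF t1 abc] L_uminus
      by (rule L_cong) (simp_all only: EQS[OF f4])
    moreover have "\<tau>2 M = - M" unfolding M' tau2_L[OF t2 abc] L_uminus
      by (rule L_cong) (simp_all only: EQS[OF f4])
    ultimately show "M \<in> g2 \<tau>1 \<tau>2" by (simp add: g2_def)
  qed
qed

definition ev :: "'a::field poly \<Rightarrow> 'a rf \<Rightarrow> 'a rf" where
  "ev p y = poly (map_poly kc p) y"

lemma ev_pCons: "ev (pCons a p) y = kc a + y * ev p y"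
  by (simp add: ev_def map_poly_pCons)

lemma ev_0[simp]: "ev 0 y = 0" by (simp add: ev_def)

lemma ev_const: "ev [:a:] y = kc a" by (simp add: ev_pCons)

lemma map_poly_kc_add: "map_poly kc (p + q) = map_poly kc p + map_poly kc q"
  by (rule poly_eqI) (simp add: coeff_map_poly kc_add)

lemma map_poly_kc_smult: "map_poly kc (smult a q) = smult (kc a) (map_poly kc q)"
  by (rule poly_eqI) (simp add: coeff_map_poly kc_mult)

lemma ev_add: "ev (p + q) y = ev p y + ev q y"
  by (simp add: ev_def map_poly_kc_add)

lemma ev_smult: "ev (smult a q) y = kc a * ev q y"
  by (simp add: ev_def map_poly_kc_smult)

lemma ev_uminus: "ev (- p) y = - ev p y"
  using ev_smult[of "-1" p y] by (simp add: kc_uminus)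

lemma ev_diff: "ev (p - q) y = ev p y - ev q y"
  using ev_add[of p "-q" y] ev_uminus[of q y] by simp

lemma ev_mult: "ev (p * q) y = ev p y * ev q y"
proof (induct p)
  case 0 then show ?case by simp
next
  case (pCons a p)
  have "pCons a p * q = smult a q + pCons 0 (p * q)" by simp
  then show ?case using pCons(2) by (simp add: ev_add ev_smult ev_pCons algebra_simps)
qed

lemma ev_monom: "ev (monom c n) y = kc c * y ^ n"
  by (simp add: ev_def map_poly_monom poly_monom)

lemma ev_sum: "ev (sum f A) y = (\<Sum>i\<in>A. ev (f i) y)"
  by (induct A rule: infinite_finite_induct) (simp_all add: ev_add)

lemma ev_pcompose: "ev (pcompose p q) y = ev p (ev q y)"
proof (induct p)
  case 0 then show ?case by simp
next
  case (pCons a p)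
  then show ?case by (simp add: pcompose_pCons ev_add ev_mult ev_const ev_pCons)
qed

lemma ev_tvar: "ev p tvar = to_fract p"
proof (induct p)
  case 0 then show ?case by simp
next
  case (pCons a p)
  have "pCons a p = [:a:] + X1 * p" by simp
  then have "to_fract (pCons a p) = kc a + tvar * to_fract p"
    by (metis kc_def to_fract_add to_fract_mult tvar_alt)
  then show ?case using pCons(2) by (simp add: ev_pCons)
qed

lemma ev_expand: assumes "degree p \<le> N" shows "ev p y = (\<Sum>k\<le>N. kc (coeff p k) * y ^ k)"
proof -
  have "ev p y = ev (\<Sum>i\<le>N. monom (coeff p i) i) y" using poly_as_sum_of_monoms'[OF assms] by simp
  then show ?thesis by (simp add: ev_sum ev_monom)
qed

interpretation rfm: module "\<lambda>(c::'a::field) (x::'a rf). kc c * x"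
  by unfold_locales (simp_all add: kc_add kc_mult algebra_simps)

definition B0 :: "'a::field rf set" where
  "B0 = {tvar ^ n | n. True} \<union> {tp ^ n | n. n \<ge> 1} \<union> {tpp ^ n | n. n \<ge> 1}"

lemma sp_t: "tvar ^ n \<in> rfm.span B0"
  by (rule rfm.span_base) (auto simp: B0_def)

lemma sp_tp: "tp ^ n \<in> rfm.span (B0 :: 'a::field rf set)"
proof (cases "n = 0")
  case True then show ?thesis using sp_t[of 0] by simp
next
  case False then show ?thesis by (intro rfm.span_base) (auto simp: B0_def)
qed

lemma sp_tpp: "tpp ^ n \<in> rfm.span (B0 :: 'a::field rf set)"
proof (cases "n = 0")
  case True then show ?thesis using sp_t[of 0] by simp
next
  case False then show ?thesis by (intro rfm.span_base) (auto simp: B0_def)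
qed

lemma sp_ev: assumes "\<And>n. y ^ n \<in> rfm.span B0" shows "ev p y \<in> rfm.span B0"
  unfolding ev_expand[OF order.refl]
  by (intro rfm.span_sum rfm.span_scale assms)

lemma sp_poly: "to_fract p \<in> rfm.span B0"
  using sp_ev[OF sp_t, of p] by (simp add: ev_tvar)

lemma ev_power: "ev (p ^ n) y = ev p y ^ n"
  by (induct n) (simp_all add: ev_mult, metis ev_const kc_1 one_pCons)

lemma sp_invt: "inverse (tvar :: 'a::field rf) ^ m \<in> rfm.span B0"
proof -
  have "ev (S1 :: 'a poly) tp = 1 - tp" by (simp add: ev_pCons kc_uminus)
  also have "\<dots> = inverse tvar" by (simp add: tp_def)
  finally have "inverse (tvar :: 'a rf) ^ m = ev (S1 ^ m) tp" by (simp add: ev_power)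
  then show ?thesis using sp_ev[OF sp_tp, of "S1 ^ m"] by simp
qed

lemma sp_poly_invt: "to_fract p * inverse (tvar :: 'a::field rf) ^ m \<in> rfm.span B0"
proof (induct m arbitrary: p)
  case 0 then show ?case using sp_poly by simp
next
  case (Suc m)
  obtain a q where p: "p = pCons a q" by (cases p) auto
  have "to_fract p = kc a + tvar * to_fract q"
    unfolding p using ev_tvar[of "pCons a q"] ev_tvar[of q] by (simp add: ev_pCons)
  then have "to_fract p * inverse tvar ^ Suc m = kc a * inverse tvar ^ Suc m + to_fract q * inverse tvar ^ m"
    using tvar_nz[where 'a='a] by (simp add: field_simps)
  then show ?case using Suc[of q] sp_invt[where 'a='a, of "Suc m"]
    by (metis rfm.span_add rfm.span_scale)
qed

lemma inv_step: fixes s :: "'b::field" assumes "s \<noteq> 0" "P = k + s * R"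
  shows "P * inverse s ^ Suc n = k * inverse s ^ Suc n + R * inverse s ^ n"
  using assms by (simp add: field_simps)

lemma sp_poly_tpp: "to_fract p * (tpp :: 'a::field rf) ^ n \<in> rfm.span B0"
proof (induct n arbitrary: p)
  case 0 then show ?case using sp_poly by simp
next
  case (Suc n)
  have "poly (p - [:poly p 1:]) 1 = 0" by simp
  then obtain r where r: "p - [:poly p 1:] = [:-1, 1:] * r" using poly_eq_0_iff_dvd[of "p - [:poly p 1:]" 1]
    by (auto elim: dvdE)
  have "p = [:poly p 1:] + S1 * (- r)" using r by (simp add: algebra_simps)
  then have "to_fract p = kc (poly p 1) + (1 - tvar) * to_fract (- r)"
    by (metis kc_def svar_alt to_fract_add to_fract_mult)
  then have "to_fract p * tpp ^ Suc n = kc (poly p 1) * tpp ^ Suc n + to_fract (- r) * tpp ^ n"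
    unfolding tpp_def by (rule inv_step[OF svar_nz])
  then show ?case using Suc[of "- r"] sp_tpp[where 'a='a, of "Suc n"]
    by (metis rfm.span_add rfm.span_scale)
qed

lemma sp_both: "to_fract p * inverse (tvar :: 'a::field rf) ^ m * tpp ^ n \<in> rfm.span B0"
proof (induct m arbitrary: n p)
  case 0 then show ?case using sp_poly_tpp by simp
next
  case (Suc m)
  show ?case
  proof (induct n arbitrary: p)
    case 0 then show ?case using sp_poly_invt[of p "Suc m"] by simp
  next
    case (Suc n)
    have "to_fract p * inverse (tvar :: 'a rf) ^ Suc m * tpp ^ Suc n
       = to_fract p * inverse tvar ^ m * tpp ^ Suc n + to_fract p * inverse tvar ^ Suc m * tpp ^ n"
      using tvar_nz[where 'a='a] svar_nz[where 'a='a] by (simp add: tpp_def field_simps)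
    then show ?case using Suc.hyps[of p] Suc.prems
      by (metis rfm.span_add \<open>\<And>n p. to_fract p * inverse tvar ^ m * tpp ^ n \<in> rfm.span B0\<close>)
  qed
qed

lemma Aset_sub_span: "Aset \<subseteq> rfm.span (B0 :: 'a::field rf set)"
proof
  fix f :: "'a rf" assume "f \<in> Aset"
  then obtain p m n where f: "f = to_fract p / (tvar ^ m * (1 - tvar) ^ n)" by (rule AsetE)
  have "f = to_fract p * inverse tvar ^ m * tpp ^ n"
    unfolding f tpp_def by (simp add: divide_inverse power_inverse inverse_mult_distrib mult.assoc)
  then show "f \<in> rfm.span B0" using sp_both by simp
qed

lemma B0_sub_A: "B0 \<subseteq> Aset"
  unfolding B0_def using A_power A_tvar A_tp A_tpp by blast

lemma span_sub_Aset: "rfm.span (B0 :: 'a::field rf set) \<subseteq> Aset"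
proof (rule rfm.span_minimal[OF B0_sub_A])
  show "rfm.subspace (Aset :: 'a rf set)"
    unfolding rfm.subspace_def using A_0 A_add A_mult A_kc by blast
qed

lemma span_B0: "rfm.span (B0 :: 'a::field rf set) = Aset"
  using Aset_sub_span span_sub_Aset by blast

lemma to_fract_monom: "to_fract (monom c k) = kc c * tvar ^ k"
  using ev_tvar[of "monom c k"] by (simp add: ev_monom)

lemma to_fract_smult: "to_fract (smult c p) = kc c * to_fract p"
  using ev_tvar[of "smult c p"] ev_tvar[of p] by (simp add: ev_smult)

lemma coeff_sum_monom: assumes "n0 \<in> {1..N}"
  shows "coeff (\<Sum>n\<in>{1..N}. monom (g n) (N - n)) (N - n0) = g n0"
proof -
  have "coeff (\<Sum>n\<in>{1..N}. monom (g n) (N - n)) (N - n0) = (\<Sum>n\<in>{1..N}. if N - n = N - n0 then g n else 0)"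
    by (simp add: coeff_sum coeff_monom)
  also have "\<dots> = (\<Sum>n\<in>{1..N}. if n = n0 then g n else 0)"
    using assms by (intro sum.cong) auto
  also have "\<dots> = g n0" using assms by simp
  finally show ?thesis .
qed

lemma dvd_cancel_order: fixes Q T :: "'a::field poly"
  assumes "[:-a, 1:] ^ N dvd Q * T" "poly T a \<noteq> 0"
  shows "[:-a, 1:] ^ N dvd Q"
proof (cases "Q = 0")
  case False
  have T: "T \<noteq> 0" using assms(2) by auto
  then have "Q * T \<noteq> 0" using False by simp
  then have "order a (Q * T) = order a Q + order a T" by (rule order_mult)
  then have "order a (Q * T) = order a Q" using order_0I[OF assms(2)] by simp
  then show ?thesis using assms(1) \<open>Q * T \<noteq> 0\<close> by (simp add: order_divides)
qed simp

lemma degree_S1: "degree (S1 :: 'a::field poly) = 1" by simp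

lemma pcompose_power: "pcompose (p ^ n) q = (pcompose p q) ^ n"
  by (induct n) (simp_all add: pcompose_mult pcompose_1)

lemma pcompose_SS: "pcompose (S1 :: 'a::field poly) S1 = X1"
  by (simp add: pcompose_pCons)

lemma small_dvd_zero: fixes Q :: "'a::field poly"
  assumes "D dvd Q" "degree D = N" "\<And>n. n \<ge> N \<Longrightarrow> coeff Q n = 0"
  shows "Q = 0"
proof (rule ccontr)
  assume Q: "Q \<noteq> 0"
  then have "N \<le> degree Q" using dvd_imp_degree_le[OF assms(1) Q] assms(2) by simp
  then have "coeff Q (degree Q) = 0" using assms(3) by simp
  then show False using Q by simp
qed

lemma ring_aux1: fixes p q r x s :: "'b::comm_ring_1"
  shows "q * s = x * (- (p * s) - r) + (p * x * s + q * s + r * x)"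
  by (simp add: algebra_simps)
lemma ring_aux2: fixes p q r x s :: "'b::comm_ring_1"
  shows "r * x = s * (- (p * x) - q) + (p * x * s + q * s + r * x)"
  by (simp add: algebra_simps)

lemma core1:
  fixes P :: "'a::field poly" and b d :: "nat \<Rightarrow> 'a"
  assumes E: "to_fract P + (\<Sum>n\<in>{1..N}. kc (b n) * inverse tvar ^ n) + (\<Sum>n\<in>{1..N}. kc (d n) * tpp ^ n) = 0"
  shows "P = 0 \<and> (\<forall>n\<in>{1..N}. b n = 0 \<and> d n = 0)"
proof -
  define Q where "Q = (\<Sum>n\<in>{1..N}. monom (b n) (N - n))"
  define R where "R = (\<Sum>n\<in>{1..N}. smult (d n) (S1 ^ (N - n)))"
  let ?t = "tvar :: 'a rf" and ?s = "1 - tvar :: 'a rf"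
  have tN: "?t ^ N = ?t ^ n * ?t ^ (N - n)" if "n \<le> N" for n
    using that by (simp flip: power_add)
  have sN: "?s ^ N = ?s ^ n * ?s ^ (N - n)" if "n \<le> N" for n
    using that by (simp flip: power_add)
  have hQ: "(\<Sum>n\<in>{1..N}. kc (b n) * inverse ?t ^ n) * (?t ^ N * ?s ^ N) = to_fract (Q * S1 ^ N)"
  proof -
    have "(\<Sum>n\<in>{1..N}. kc (b n) * inverse ?t ^ n) * (?t ^ N * ?s ^ N)
      = (\<Sum>n\<in>{1..N}. to_fract (monom (b n) (N - n)) * to_fract (S1 ^ N))"
      unfolding sum_distrib_right
    proof (rule sum.cong[OF refl])
      fix n assume "n \<in> {1..N}"
      then have "n \<le> N" by simp
      show "kc (b n) * inverse ?t ^ n * (?t ^ N * ?s ^ N) = to_fract (monom (b n) (N - n)) * to_fract (S1 ^ N)"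
        unfolding tN[OF \<open>n \<le> N\<close>] to_fract_monom to_fract_power svar_alt[symmetric]
        using tvar_nz[where 'a='a] by (simp add: field_simps)
    qed
    then show ?thesis by (simp add: Q_def sum_distrib_right)
  qed
  have hR: "(\<Sum>n\<in>{1..N}. kc (d n) * tpp ^ n) * (?t ^ N * ?s ^ N) = to_fract (R * X1 ^ N)"
  proof -
    have "(\<Sum>n\<in>{1..N}. kc (d n) * tpp ^ n) * (?t ^ N * ?s ^ N)
      = (\<Sum>n\<in>{1..N}. to_fract (smult (d n) (S1 ^ (N - n))) * to_fract (X1 ^ N))"
      unfolding sum_distrib_right
    proof (rule sum.cong[OF refl])
      fix n assume "n \<in> {1..N}"
      then have "n \<le> N" by simp
      have "kc (d n) * tpp ^ n * (?t ^ N * ?s ^ N) = kc (d n) * ?s ^ (N - n) * ?t ^ N * (inverse ?s ^ n * ?s ^ n)"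
        unfolding sN[OF \<open>n \<le> N\<close>] tpp_def by (simp add: algebra_simps)
      also have "inverse ?s ^ n * ?s ^ n = 1"
        using svar_nz[where 'a='a] by (simp add: power_mult_distrib[symmetric])
      finally show "kc (d n) * tpp ^ n * (?t ^ N * ?s ^ N) = to_fract (smult (d n) (S1 ^ (N - n))) * to_fract (X1 ^ N)"
        unfolding to_fract_smult to_fract_power svar_alt[symmetric] tvar_alt[symmetric] by simp
    qed
    then show ?thesis by (simp add: R_def sum_distrib_right to_fract_smult mult.assoc)
  qed
  have "to_fract (P * X1 ^ N * S1 ^ N + Q * S1 ^ N + R * X1 ^ N) = 0 * (?t ^ N * ?s ^ N)"
    unfolding E[symmetric] distrib_right hQ hR
    by (simp add: to_fract_power flip: svar_alt tvar_alt)
  then have PE: "P * X1 ^ N * S1 ^ N + Q * S1 ^ N + R * X1 ^ N = 0" by (metis mult_zero_left to_fract_eq_0_iff)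
  have "Q * S1 ^ N = X1 ^ N * (- (P * S1 ^ N) - R) + (P * X1 ^ N * S1 ^ N + Q * S1 ^ N + R * X1 ^ N)"
    by (rule ring_aux1)
  then have "Q * S1 ^ N = X1 ^ N * (- (P * S1 ^ N) - R)" unfolding PE by simp
  then have "[:-0, 1:] ^ N dvd Q * S1 ^ N" by simp
  then have dQ: "X1 ^ N dvd Q" using dvd_cancel_order[of 0 N Q "S1 ^ N"] by simp
  have Q0: "Q = 0"
  proof (rule small_dvd_zero[OF dQ])
    show "degree (X1 ^ N :: 'a poly) = N" by (simp add: degree_power_eq)
    fix k assume "N \<le> k"
    then show "coeff Q k = 0" unfolding Q_def by (auto simp add: coeff_sum coeff_monom intro!: sum.neutral)
  qed
  have "R * X1 ^ N = S1 ^ N * (- (P * X1 ^ N) - Q) + (P * X1 ^ N * S1 ^ N + Q * S1 ^ N + R * X1 ^ N)"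
    by (rule ring_aux2)
  then have "R * X1 ^ N = S1 ^ N * (- (P * X1 ^ N) - Q)" unfolding PE by simp
  also have "S1 ^ N = [:-1, 1:] ^ N * (-1) ^ N"
  proof -
    have "S1 = [:-1, 1:] * (-1)" by simp
    then show ?thesis by (metis power_mult_distrib)
  qed
  finally have "[:-1, 1:] ^ N dvd R * X1 ^ N" by (simp add: mult.assoc)
  then have dR: "[:-1, 1:] ^ N dvd R" using dvd_cancel_order[of 1 N R "X1 ^ N"] by simp
  have R0: "R = 0"
  proof (rule small_dvd_zero[OF dR])
    show "degree ([:-1, 1:] ^ N :: 'a poly) = N" by (simp add: degree_power_eq)
    fix k assume k: "N \<le> k"
    have "degree (smult (d n) (S1 ^ (N - n))) < k" if "n \<in> {1..N}" for n
    proof -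
      have "degree (smult (d n) (S1 ^ (N - n))) \<le> degree ((S1::'a poly) ^ (N - n))" by (rule degree_smult_le)
      also have "\<dots> = N - n" by (simp add: degree_power_eq)
      finally have "degree (smult (d n) (S1 ^ (N - n))) \<le> N - n" .
      moreover have "N - n < k" using that k by auto
      ultimately show ?thesis by linarith
    qed
    then show "coeff R k = 0" unfolding R_def coeff_sum
      by (intro sum.neutral ballI coeff_eq_0) blast
  qed
  have "P * (X1 ^ N * S1 ^ N) = 0" using PE Q0 R0 by (simp add: mult.assoc)
  then have P0: "P = 0" by simp
  have "pcompose R S1 = (\<Sum>n\<in>{1..N}. monom (d n) (N - n))"
    unfolding R_def by (simp add: pcompose_sum pcompose_smult pcompose_power pcompose_SS monom_altdef)
  then have R': "(\<Sum>n\<in>{1..N}. monom (d n) (N - n)) = 0" using R0 by simp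
  show ?thesis
  proof (intro conjI P0 ballI)
    fix n assume n: "n \<in> {1..N}"
    show "b n = 0" using coeff_sum_monom[OF n, of b] Q0 unfolding Q_def by simp
    show "d n = 0" using coeff_sum_monom[OF n, of d] R' by simp
  qed
qed

lemma sum_split0: fixes g :: "nat \<Rightarrow> 'b::comm_monoid_add" shows "(\<Sum>k\<le>N. g k) = g 0 + (\<Sum>k\<in>{1..N}. g k)"
proof -
  have "(\<Sum>k\<le>N. g k) = (\<Sum>k\<in>{0..N}. g k)" by (simp only: atMost_atLeast0)
  also have "\<dots> = g 0 + (\<Sum>k\<in>{Suc 0..N}. g k)" by (rule sum.atLeast_Suc_atMost) simp
  finally show ?thesis by simp
qed

lemma ev_S1: "ev S1 y = 1 - y" by (simp add: ev_pCons kc_uminus)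

lemma core2:
  fixes P B D :: "'a::field poly"
  assumes B0: "coeff B 0 = 0" and D0: "coeff D 0 = 0"
    and E: "ev P tvar + ev B tp + ev D tpp = 0"
  shows "P = 0 \<and> B = 0 \<and> D = 0"
proof -
  define C where "C = pcompose B S1"
  define N where "N = max (degree C) (degree D)"
  let ?it = "inverse (tvar :: 'a rf)"
  have "ev B tp = ev C ?it" unfolding C_def ev_pcompose ev_S1 tp_def ..
  also have "\<dots> = (\<Sum>k\<le>N. kc (coeff C k) * ?it ^ k)" by (rule ev_expand) (simp add: N_def)
  also have "\<dots> = kc (coeff C 0) + (\<Sum>k\<in>{1..N}. kc (coeff C k) * ?it ^ k)"
    unfolding sum_split0 by simp
  finally have eB: "ev B tp = kc (coeff C 0) + (\<Sum>k\<in>{1..N}. kc (coeff C k) * ?it ^ k)" .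
  have "ev D tpp = (\<Sum>k\<le>N. kc (coeff D k) * tpp ^ k)" by (rule ev_expand) (simp add: N_def)
  then have eD: "ev D tpp = (\<Sum>k\<in>{1..N}. kc (coeff D k) * tpp ^ k)"
    unfolding sum_split0 by (simp add: D0)
  have "to_fract (P + [:coeff C 0:]) + (\<Sum>k\<in>{1..N}. kc (coeff C k) * ?it ^ k) + (\<Sum>k\<in>{1..N}. kc (coeff D k) * tpp ^ k) = 0"
    using E unfolding eB eD ev_tvar by (simp add: kc_def add.assoc)
  from core1[OF this] have c1: "P + [:coeff C 0:] = 0" and c2: "\<And>k. k \<in> {1..N} \<Longrightarrow> coeff C k = 0 \<and> coeff D k = 0"
    by auto
  have Dz: "D = 0"
  proof (rule poly_eqI)
    fix k
    show "coeff D k = coeff 0 k"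
    proof (cases "k = 0")
      case True then show ?thesis using D0 by simp
    next
      case False
      show ?thesis
      proof (cases "k \<le> N")
        case True then show ?thesis using c2[of k] False by simp
      next
        case False then show ?thesis by (simp add: N_def coeff_eq_0)
      qed
    qed
  qed
  have "degree C = 0"
  proof (rule ccontr)
    assume "degree C \<noteq> 0"
    then have "degree C \<in> {1..N}" by (simp add: N_def)
    then have "coeff C (degree C) = 0" using c2 by blast
    then have "C = 0" by simp
    then show False using \<open>degree C \<noteq> 0\<close> by simp
  qed
  then have "degree B = 0" unfolding C_def by (simp add: degree_pcompose)
  then have Bz: "B = 0" using B0 by (metis degree_0_id pCons_0_0)
  then have "coeff C 0 = 0" by (simp add: C_def)
  then have "P = 0" using c1 by simp
  then show ?thesis using Bz Dz by simp
qed

lemma coeff_sum_monom2: assumes "finite I"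
  shows "coeff (\<Sum>n\<in>I. monom (g n) n) k = (if k \<in> I then g k else 0)"
  using assms by (simp add: coeff_sum coeff_monom)

lemma inj_tvar_pow: "inj (\<lambda>n. (tvar :: 'a::field rf) ^ n)"
proof (rule injI)
  fix n m assume "(tvar :: 'a rf) ^ n = tvar ^ m"
  then have "to_fract ((X1::'a poly) ^ n) = to_fract (X1 ^ m)" by (simp add: to_fract_power tvar_alt)
  then have "(X1::'a poly) ^ n = X1 ^ m" by simp
  then have "degree ((X1::'a poly) ^ n) = degree ((X1::'a poly) ^ m)" by simp
  then show "n = m" by (simp add: degree_power_eq)
qed

lemma inj_tp_pow: "inj_on (\<lambda>n. (tp :: 'a::field rf) ^ n) {1..}"
proof (rule inj_onI)
  fix n m assume n: "n \<in> {1..}" and m: "m \<in> {1..}" and e: "(tp :: 'a rf) ^ n = tp ^ m"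
  define B :: "'a poly" where "B = monom 1 n - monom 1 m"
  have "ev 0 tvar + ev B tp + ev 0 tpp = 0" using e by (simp add: B_def ev_diff ev_monom)
  moreover have "coeff B 0 = 0" using n m by (simp add: B_def)
  ultimately have "B = 0" using core2[of B 0 0] by simp
  then have "coeff B n = 0" by simp
  then show "n = m" by (simp add: B_def split: if_splits)
qed

lemma inj_tpp_pow: "inj_on (\<lambda>n. (tpp :: 'a::field rf) ^ n) {1..}"
proof (rule inj_onI)
  fix n m assume n: "n \<in> {1..}" and m: "m \<in> {1..}" and e: "(tpp :: 'a rf) ^ n = tpp ^ m"
  define D :: "'a poly" where "D = monom 1 n - monom 1 m"
  have "ev 0 tvar + ev 0 tp + ev D tpp = 0" using e by (simp add: D_def ev_diff ev_monom)
  moreover have "coeff D 0 = 0" using n m by (simp add: D_def)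
  ultimately have "D = 0" using core2[of 0 D 0] by simp
  then have "coeff D n = 0" by simp
  then show "n = m" by (simp add: D_def split: if_splits)
qed

lemma indep_B0: "\<not> rfm.dependent (B0 :: 'a::field rf set)"
proof
  assume "rfm.dependent (B0 :: 'a rf set)"
  then have "\<exists>t u. finite t \<and> t \<subseteq> B0 \<and> (\<Sum>v\<in>t. kc (u v) * v) = (0 :: 'a rf) \<and> (\<exists>v\<in>t. u v \<noteq> 0)"
    unfolding rfm.dependent_explicit .
  then obtain F c where F: "finite F" "F \<subseteq> B0" and s: "(\<Sum>v\<in>F. kc (c v) * v) = (0 :: 'a rf)"
    and nz: "\<exists>v\<in>F. c v \<noteq> 0" by blast
  define T0 where "T0 = range (\<lambda>n. (tvar :: 'a rf) ^ n)"
  define T1 where "T1 = (\<lambda>n. (tp :: 'a rf) ^ n) ` {1..}"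
  define T2 where "T2 = (\<lambda>n. (tpp :: 'a rf) ^ n) ` {1..}"
  have B0T: "B0 = T0 \<union> T1 \<union> T2" unfolding B0_def T0_def T1_def T2_def by auto
  define F0 where "F0 = F \<inter> T0"
  define F1 where "F1 = F \<inter> T1 - T0"
  define F2 where "F2 = F - T0 - T1"
  define I0 where "I0 = {n. (tvar :: 'a rf) ^ n \<in> F0}"
  define I1 where "I1 = {n. n \<ge> 1 \<and> (tp :: 'a rf) ^ n \<in> F1}"
  define I2 where "I2 = {n. n \<ge> 1 \<and> (tpp :: 'a rf) ^ n \<in> F2}"
  have F0I: "F0 = (\<lambda>n. tvar ^ n) ` I0" unfolding F0_def I0_def T0_def by auto
  have F1I: "F1 = (\<lambda>n. tp ^ n) ` I1" unfolding F1_def I1_def T1_def by auto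
  have F2I: "F2 = (\<lambda>n. tpp ^ n) ` I2" using F(2) unfolding F2_def I2_def B0T T2_def by auto
  have inj0: "inj_on (\<lambda>n. (tvar :: 'a rf) ^ n) I0" using inj_tvar_pow by (rule inj_on_subset) simp
  have inj1: "inj_on (\<lambda>n. (tp :: 'a rf) ^ n) I1" using inj_tp_pow by (rule inj_on_subset) (auto simp: I1_def)
  have inj2: "inj_on (\<lambda>n. (tpp :: 'a rf) ^ n) I2" using inj_tpp_pow by (rule inj_on_subset) (auto simp: I2_def)
  have fF: "finite F0" "finite F1" "finite F2" using F(1) by (simp_all add: F0_def F1_def F2_def)
  have fI: "finite I0" "finite I1" "finite I2"
    using finite_imageD[OF _ inj0] finite_imageD[OF _ inj1] finite_imageD[OF _ inj2] fF F0I F1I F2I by auto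
  have FU: "F = F0 \<union> F1 \<union> F2" unfolding F0_def F1_def F2_def by auto
  have "(\<Sum>v\<in>F. kc (c v) * v) = (\<Sum>v\<in>F0. kc (c v) * v) + (\<Sum>v\<in>F1. kc (c v) * v) + (\<Sum>v\<in>F2. kc (c v) * v)"
    unfolding FU using fF by (subst sum.union_disjoint, auto simp: F0_def F1_def F2_def)+
  also have "(\<Sum>v\<in>F0. kc (c v) * v) = ev (\<Sum>n\<in>I0. monom (c (tvar ^ n)) n) tvar"
    unfolding F0I sum.reindex[OF inj0] by (simp add: ev_sum ev_monom)
  also have "(\<Sum>v\<in>F1. kc (c v) * v) = ev (\<Sum>n\<in>I1. monom (c (tp ^ n)) n) tp"
    unfolding F1I sum.reindex[OF inj1] by (simp add: ev_sum ev_monom)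
  also have "(\<Sum>v\<in>F2. kc (c v) * v) = ev (\<Sum>n\<in>I2. monom (c (tpp ^ n)) n) tpp"
    unfolding F2I sum.reindex[OF inj2] by (simp add: ev_sum ev_monom)
  finally have E: "ev (\<Sum>n\<in>I0. monom (c (tvar ^ n)) n) tvar + ev (\<Sum>n\<in>I1. monom (c (tp ^ n)) n) tp
      + ev (\<Sum>n\<in>I2. monom (c (tpp ^ n)) n) tpp = 0" using s by simp
  have "0 \<notin> I1" "0 \<notin> I2" by (auto simp: I1_def I2_def)
  then have "coeff (\<Sum>n\<in>I1. monom (c (tp ^ n)) n) 0 = 0" "coeff (\<Sum>n\<in>I2. monom (c (tpp ^ n)) n) 0 = 0"
    using fI by (simp_all add: coeff_sum_monom2)
  from core2[OF this E] have z: "(\<Sum>n\<in>I0. monom (c (tvar ^ n)) n) = 0" "(\<Sum>n\<in>I1. monom (c (tp ^ n)) n) = 0"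
    "(\<Sum>n\<in>I2. monom (c (tpp ^ n)) n) = 0" by auto
  have "c v = 0" if "v \<in> F" for v
  proof -
    have "v \<in> F0 \<or> v \<in> F1 \<or> v \<in> F2" using that FU by blast
    then show ?thesis
    proof (elim disjE)
      assume "v \<in> F0"
      then obtain n where n: "n \<in> I0" "v = tvar ^ n" using F0I by blast
      show ?thesis using arg_cong[OF z(1), of "\<lambda>p. coeff p n"] n fI by (simp add: coeff_sum_monom2)
    next
      assume "v \<in> F1"
      then obtain n where n: "n \<in> I1" "v = tp ^ n" using F1I by blast
      show ?thesis using arg_cong[OF z(2), of "\<lambda>p. coeff p n"] n fI by (simp add: coeff_sum_monom2)
    next
      assume "v \<in> F2"
      then obtain n where n: "n \<in> I2" "v = tpp ^ n" using F2I by blast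
      show ?thesis using arg_cong[OF z(3), of "\<lambda>p. coeff p n"] n fI by (simp add: coeff_sum_monom2)
    qed
  qed
  then show False using nz by blast
qed

lemma sm_sm: "sm a (sm b u) = sm (a * b) (u :: 'a::field mat)"
  by (simp add: sm_def vec_eq_iff mult.assoc)

lemma sm_add_left: "sm (a + b) u = sm a u + sm b (u :: 'a::field mat)"
  by (simp add: sm_def vec_eq_iff distrib_right)

lemma sm_sum_left: "sm (sum f A) u = (\<Sum>x\<in>A. sm (f x) (u :: 'a::field mat))"
  by (induct A rule: infinite_finite_induct) (simp_all add: sm_zero sm_add_left)

lemma sm_inj: assumes "u \<noteq> 0" "sm a u = sm b (u :: 'a::field mat)" shows "a = b"
proof -
  obtain i j where "u $ i $ j \<noteq> 0" using assms(1) by (auto simp: vec_eq_iff)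
  moreover have "a * u $ i $ j = b * u $ i $ j"
    using arg_cong[OF assms(2), of "\<lambda>M. M $ i $ j"] by (simp add: sm_def)
  ultimately show ?thesis by simp
qed

lemma Bset_eq: "Bset (u :: 'a::field mat) = (\<lambda>f. sm f u) ` B0"
proof -
  have "{tvar ^ n |n. True} = insert (1::'a rf) {tvar ^ n |n. n \<ge> 1}"
  proof (intro set_eqI iffI)
    fix x :: "'a rf" assume "x \<in> {tvar ^ n |n. True}"
    then obtain n where x: "x = tvar ^ n" by blast
    show "x \<in> insert 1 {tvar ^ n |n. n \<ge> 1}"
    proof (cases "n = 0")
      case True then show ?thesis using x by simp
    next
      case False then have "n \<ge> 1" by simp
      then show ?thesis using x by blast
    qed
  next
    fix x :: "'a rf" assume "x \<in> insert 1 {tvar ^ n |n. n \<ge> 1}"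
    moreover have "(1::'a rf) = tvar ^ 0" by simp
    ultimately show "x \<in> {tvar ^ n |n. True}" by blast
  qed
  then have B0eq: "B0 = insert (1::'a rf) ({tvar ^ n |n. n \<ge> 1} \<union> {tp ^ n |n. n \<ge> 1} \<union> {tpp ^ n |n. n \<ge> 1})"
    unfolding B0_def by auto
  show ?thesis unfolding Bset_def tens_def B0eq image_insert image_Un sm_one by auto
qed
lemma indep_B0_explicit:
  assumes "finite G" "G \<subseteq> (B0 :: 'a::field rf set)" "(\<Sum>g\<in>G. kc (r g) * g) = 0" "g \<in> G"
  shows "r g = 0"
proof (rule ccontr)
  assume "r g \<noteq> 0"
  then have "\<exists>t u. finite t \<and> t \<subseteq> (B0 :: 'a rf set) \<and> (\<Sum>v\<in>t. kc (u v) * v) = 0 \<and> (\<exists>v\<in>t. u v \<noteq> 0)"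
    using assms by (intro exI[of _ G] exI[of _ r]) auto
  then have "rfm.dependent (B0 :: 'a rf set)" unfolding rfm.dependent_explicit .
  then show False using indep_B0[where 'a='a] by (rule notE[rotated])
qed

lemma basis_transfer:
  assumes u: "(u :: 'a::field mat) \<noteq> 0"
  shows "k_basis (Bset u) ((\<lambda>f. sm f u) ` Aset)"
proof -
  let ?phi = "\<lambda>f. sm f u"
  have inj: "inj ?phi" by (rule injI) (rule sm_inj[OF u])
  define GG where "GG F = B0 \<inter> ?phi -` F" for F
  have pull: "finite (GG F) \<and> GG F \<subseteq> B0 \<and> (\<Sum>w\<in>F. sm (kc (c w)) w) = ?phi (\<Sum>g\<in>GG F. kc (c (?phi g)) * g)
        \<and> F = ?phi ` GG F"
    if F: "finite F" "F \<subseteq> ?phi ` B0" for F c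
  proof -
    define G where "G = GG F"
    have FG: "F = ?phi ` G" using F(2) unfolding G_def GG_def by auto
    have injG: "inj_on ?phi G" using inj by (rule inj_on_subset) simp
    have fG: "finite G" using finite_imageD[OF _ injG] F(1) FG by simp
    have "(\<Sum>w\<in>F. sm (kc (c w)) w) = (\<Sum>g\<in>G. sm (kc (c (?phi g))) (?phi g))"
      unfolding FG sum.reindex[OF injG] by simp
    also have "\<dots> = ?phi (\<Sum>g\<in>G. kc (c (?phi g)) * g)" by (simp add: sm_sum_left sm_sm)
    finally have eq: "(\<Sum>w\<in>F. sm (kc (c w)) w) = ?phi (\<Sum>g\<in>G. kc (c (?phi g)) * g)" .
    have GB: "G \<subseteq> B0" by (simp add: G_def GG_def)
    show ?thesis unfolding G_def[symmetric] using fG GB eq FG by (intro conjI)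
  qed
  have S: "Bset u \<subseteq> ?phi ` Aset" unfolding Bset_eq using B0_sub_A by blast
  have I: "k_indep (Bset u)"
    unfolding k_indep_def Bset_eq
  proof (intro allI impI ballI)
    fix F c w assume H: "finite F \<and> F \<subseteq> ?phi ` B0 \<and> (\<Sum>w\<in>F. sm (kc (c w)) w) = 0" and w: "w \<in> F"
    define G where "G = GG F"
    have HF: "finite F" "F \<subseteq> ?phi ` B0" using H by simp_all
    note G = pull[OF HF, of c, folded G_def, THEN conjunct1] pull[OF HF, of c, folded G_def, THEN conjunct2, THEN conjunct1]
      pull[OF HF, of c, folded G_def, THEN conjunct2, THEN conjunct2, THEN conjunct1]
      pull[OF HF, of c, folded G_def, THEN conjunct2, THEN conjunct2, THEN conjunct2]
    have "?phi (\<Sum>g\<in>G. kc (c (?phi g)) * g) = ?phi 0" using H G(3) by (simp add: sm_zero)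
    then have z: "(\<Sum>g\<in>G. kc (c (?phi g)) * g) = 0" by (rule sm_inj[OF u])
    obtain g where g: "g \<in> G" "w = ?phi g" using w G(4) by blast
    show "c w = 0" using indep_B0_explicit[OF G(1,2) z g(1)] g(2) by simp
  qed
  have P: "k_span (Bset u) = ?phi ` Aset"
  proof
    show "k_span (Bset u) \<subseteq> ?phi ` Aset"
    proof
      fix v assume "v \<in> k_span (Bset u)"
      then obtain F c where F: "finite F" "F \<subseteq> ?phi ` B0" and v: "v = (\<Sum>w\<in>F. sm (kc (c w)) w)"
        unfolding k_span_def Bset_eq by blast
      define G where "G = GG F"
      note G = pull[OF F, of c, folded G_def, THEN conjunct1] pull[OF F, of c, folded G_def, THEN conjunct2, THEN conjunct1]
        pull[OF F, of c, folded G_def, THEN conjunct2, THEN conjunct2, THEN conjunct1]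
      have "(\<Sum>g\<in>G. kc (c (?phi g)) * g) \<in> rfm.span B0"
        unfolding rfm.span_explicit using G(1,2) by (intro CollectI exI[of _ G] exI[of _ "\<lambda>g. c (?phi g)"]) simp
      then show "v \<in> ?phi ` Aset" using v G(3) span_B0 by auto
    qed
    show "?phi ` Aset \<subseteq> k_span (Bset u)"
    proof
      fix v assume "v \<in> ?phi ` Aset"
      then obtain f where f: "f \<in> Aset" "v = ?phi f" by blast
      then have "f \<in> rfm.span B0" using span_B0 by blast
      then obtain t r where t: "finite t" "t \<subseteq> B0" and fe: "f = (\<Sum>a\<in>t. kc (r a) * a)"
        unfolding rfm.span_explicit by blast
      have injt: "inj_on ?phi t" using inj by (rule inj_on_subset) simp
      define c where "c w = r (inv_into t ?phi w)" for w
      have "(\<Sum>w\<in>?phi ` t. sm (kc (c w)) w) = (\<Sum>a\<in>t. sm (kc (c (?phi a))) (?phi a))"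
        by (rule sum.reindex[OF injt, unfolded comp_def])
      also have "\<dots> = (\<Sum>a\<in>t. sm (kc (r a) * a) u)"
        by (rule sum.cong[OF refl]) (simp add: c_def inv_into_f_f[OF injt] sm_sm)
      also have "\<dots> = v" unfolding f(2) fe by (simp add: sm_sum_left)
      finally have "v = (\<Sum>w\<in>?phi ` t. sm (kc (c w)) w)" by simp
      moreover have "?phi ` t \<subseteq> Bset u" unfolding Bset_eq using t(2) by blast
      ultimately show "v \<in> k_span (Bset u)" unfolding k_span_def using t(1) by blast
    qed
  qed
  show ?thesis unfolding k_basis_def using S I P by blast
qed

lemma u_nz: assumes two: "(2::'a::field) \<noteq> 0"
  shows "(u0::'a mat) \<noteq> 0" "(u1::'a mat) \<noteq> 0" "(u2::'a mat) \<noteq> 0"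
proof -
  have q: "(1 / 4 :: 'a rf) \<noteq> 0" using four_nz[OF two] by simp
  show "(u0::'a mat) \<noteq> 0"
  proof
    assume "(u0::'a mat) = 0"
    then have "L (tpp / 4) ((tpp - 1) / 4) (1 / 4) = L 0 0 (0::'a rf)" by (simp add: u0_L L_zero[symmetric])
    then show False using L_inj[OF two] q by blast
  qed
  show "(u1::'a mat) \<noteq> 0"
  proof
    assume "(u1::'a mat) = 0"
    then have "L (1 / 4) (tvar / 4) ((tvar - 1) / 4) = L 0 0 (0::'a rf)" by (simp add: u1_L L_zero[symmetric])
    then show False using L_inj[OF two] q by blast
  qed
  show "(u2::'a mat) \<noteq> 0"
  proof
    assume "(u2::'a mat) = 0"
    then have "L ((tp - 1) / 4) (1 / 4) (tp / 4) = L 0 0 (0::'a rf)" by (simp add: u2_L L_zero[symmetric])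
    then show False using L_inj[OF two] q by blast
  qed
qed

theorem corollary2p2:
  fixes \<tau>1 \<tau>2 :: "'a::field mat \<Rightarrow> 'a mat"
  assumes "(2::'a) \<noteq> 0"
    and "tau1_spec \<tau>1" and "tau2_spec \<tau>2"
  shows "k_basis (Bset (u0::'a mat)) (g0 \<tau>1 \<tau>2)
       \<and> k_basis (Bset (u1::'a mat)) (g1 \<tau>1 \<tau>2)
       \<and> k_basis (Bset (u2::'a mat)) (g2 \<tau>1 \<tau>2)"
  unfolding g0_eq[OF assms] g1_eq[OF assms] g2_eq[OF assms]
  using basis_transfer u_nz[OF assms(1)] by blast

end
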